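(* For every integer $s\ge 2$, there exist mutually unbiased equiangular tight frames $(v_1,\dots,v_k)$ and $(w_1,\dots,w_l)$ for $\mathbb{R}^m$, where $$k=2^{s-1}(2^s-1),\qquad l=2^{s-1}(2^s+1),\qquad m=\frac{2^{2s}-1}{3}.$$
   Context: A system of unit vectors $(v_1,\dots,v_n)$ in $\mathbb{R}^m$ is an equiangular tight frame if $|\langle v_i,v_j\rangle|$ is the same constant for all $i\ne j$ and $VV^\top=\frac{n}{m}\mathrm{I}_m$, where $V$ has columns $v_i$. Two equiangular tight frames $(v_1,\dots,v_k)$, $(w_1,\dots,w_l)$ for $\mathbb{R}^m$ are mutually unbiased if there is $c\in\mathbb{R}$ with $|\langle v_i,w_j\rangle|=c$ for all $i,j$. *)

theory Defs
  imports Complex_Main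
begin

text \<open>Vectors of R^m are represented as functions nat => real, of which only the
coordinates 0..m-1 are used. A frame of n vectors is a function nat => (nat => real),
of which only the indices 0..n-1 are used.\<close>

definition ip :: "nat \<Rightarrow> (nat \<Rightarrow> real) \<Rightarrow> (nat \<Rightarrow> real) \<Rightarrow> real" where
  "ip m x y = (\<Sum>t<m. x t * y t)"

definition is_ETF :: "nat \<Rightarrow> nat \<Rightarrow> (nat \<Rightarrow> nat \<Rightarrow> real) \<Rightarrow> bool" where
  "is_ETF m n v \<longleftrightarrow>
     (\<forall>i<n. ip m (v i) (v i) = 1) \<and>
     (\<exists>c. \<forall>i<n. \<forall>j<n. i \<noteq> j \<longrightarrow> \<bar>ip m (v i) (v j)\<bar> = c) \<and>
     (\<forall>a<m. \<forall>b<m. (\<Sum>i<n. v i a * v i b) = (real n / real m) * (if a = b then 1 else 0))"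

definition mutually_unbiased ::
  "nat \<Rightarrow> nat \<Rightarrow> (nat \<Rightarrow> nat \<Rightarrow> real) \<Rightarrow> nat \<Rightarrow> (nat \<Rightarrow> nat \<Rightarrow> real) \<Rightarrow> bool" where
  "mutually_unbiased m k v l w \<longleftrightarrow>
     is_ETF m k v \<and> is_ETF m l w \<and>
     (\<exists>c. \<forall>i<k. \<forall>j<l. \<bar>ip m (v i) (w j)\<bar> = c)"

end

theory Submission
  imports Defs
begin

definition c4 :: "nat \<Rightarrow> real" where "c4 d = (if d = 3 then -1 else 1)"
definition h4 :: "nat \<Rightarrow> nat \<Rightarrow> real" where
  "h4 d e = (-1) ^ (d mod 2 * (e div 2) + d div 2 * (e mod 2))"

lemma lt4: "d < (4::nat) \<Longrightarrow> d = 0 \<or> d = 1 \<or> d = 2 \<or> d = 3" by auto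

lemma sum4: "(\<Sum>c<(4::nat). f c) = f 0 + f 1 + f 2 + (f 3 :: real)"
  by (simp add: eval_nat_numeral)

lemma h4_sym: "h4 d e = h4 e d" unfolding h4_def by (simp add: mult.commute add.commute)
lemma h4_diag: "h4 d d = 1" unfolding h4_def
  by (simp add: mult.commute)
lemma h4_pm: "h4 d e = 1 \<or> h4 d e = -1" unfolding h4_def
  by (simp add: minus_one_power_iff)
lemma c4_pm: "c4 d = 1 \<or> c4 d = -1" unfolding c4_def by simp

lemma base0: "d < 4 \<Longrightarrow> e < 4 \<Longrightarrow> (\<Sum>c<4. h4 d c * h4 c e) = (if d = e then 4 else 0)"
  apply (drule lt4, drule lt4)
  by (auto simp: sum4 h4_def)
lemma base1: "d < 4 \<Longrightarrow> e < 4 \<Longrightarrow> (\<Sum>c<4. h4 d c * c4 c * h4 c e) = 2 * c4 d * c4 e * h4 d e"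
  apply (drule lt4, drule lt4)
  by (auto simp: sum4 h4_def c4_def)
lemma base2: "(\<Sum>c<4. c4 c) = 2"
  by (simp add: sum4 c4_def)

lemma sum_split4: "(\<Sum>c<4*(n::nat). f c) = (\<Sum>c'<n. \<Sum>d<4. f (4*c'+d) :: real)"
  by (induction n) (simp_all add: sum4 eval_nat_numeral ac_simps)


fun Hs :: "nat \<Rightarrow> nat \<Rightarrow> nat \<Rightarrow> real" where
  "Hs 0 a b = 1"
| "Hs (Suc s) a b = h4 (a mod 4) (b mod 4) * Hs s (a div 4) (b div 4)"

fun Cs :: "nat \<Rightarrow> nat \<Rightarrow> real" where
  "Cs 0 a = 1"
| "Cs (Suc s) a = c4 (a mod 4) * Cs s (a div 4)"

lemma Hs_sym: "Hs s a b = Hs s b a"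
  by (induction s arbitrary: a b) (simp_all add: h4_sym)

lemma Hs_diag: "Hs s a a = 1"
  by (induction s arbitrary: a) (simp_all add: h4_diag)

lemma Hs_pm: "Hs s a b = 1 \<or> Hs s a b = -1"
proof (induction s arbitrary: a b)
  case (Suc s)
  have "Hs s (a div 4) (b div 4) = 1 \<or> Hs s (a div 4) (b div 4) = -1" by (rule Suc.IH)
  then show ?case using h4_pm[of "a mod 4" "b mod 4"] by (elim disjE) auto
qed simp

lemma Cs_pm: "Cs s a = 1 \<or> Cs s a = -1"
proof (induction s arbitrary: a)
  case (Suc s)
  have "Cs s (a div 4) = 1 \<or> Cs s (a div 4) = -1" by (rule Suc.IH)
  then show ?case using c4_pm[of "a mod 4"] by (elim disjE) auto
qed simp

lemma abs_Hs: "\<bar>Hs s a b\<bar> = 1" using Hs_pm[of s a b] by auto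

lemma split_aux: "d < 4 \<Longrightarrow> (4 * c' + d) mod 4 = d \<and> (4 * c' + d) div 4 = (c'::nat)"
  by auto

lemma S0: "a < 4^s \<Longrightarrow> b < 4^s \<Longrightarrow>
  (\<Sum>c<4^s. Hs s a c * Hs s c b) = (if a = b then 4^s else 0)"
proof (induction s arbitrary: a b)
  case 0 then show ?case by simp
next
  case (Suc s)
  have ad: "a div 4 < 4^s" "b div 4 < 4^s" using Suc.prems by auto
  have "(\<Sum>c<4^Suc s. Hs (Suc s) a c * Hs (Suc s) c b)
     = (\<Sum>c'<4^s. \<Sum>d<4. h4 (a mod 4) d * h4 d (b mod 4) * (Hs s (a div 4) c' * Hs s c' (b div 4)))"
    by (simp add: sum_split4 split_aux ac_simps)
  also have "\<dots> = (\<Sum>c'<4^s. (\<Sum>d<4. h4 (a mod 4) d * h4 d (b mod 4)) * (Hs s (a div 4) c' * Hs s c' (b div 4)))"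
    by (simp add: sum_distrib_right)
  also have "\<dots> = (\<Sum>d<4. h4 (a mod 4) d * h4 d (b mod 4)) * (\<Sum>c'<4^s. Hs s (a div 4) c' * Hs s c' (b div 4))"
    by (simp add: sum_distrib_left)
  also have "\<dots> = (if a mod 4 = b mod 4 then 4 else 0) * (if a div 4 = b div 4 then 4^s else 0)"
    using Suc.IH[OF ad] base0[of "a mod 4" "b mod 4"] by simp
  also have "\<dots> = (if a = b then 4^Suc s else 0)"
    by (auto, metis div_mult_mod_eq)
  finally show ?case .
qed

lemma S1: "(\<Sum>c<4^s. Hs s a c * Cs s c * Hs s c b) = 2^s * Cs s a * Cs s b * Hs s a b"
proof (induction s arbitrary: a b)
  case 0 then show ?case by simp
next
  case (Suc s)
  have "(\<Sum>c<4^Suc s. Hs (Suc s) a c * Cs (Suc s) c * Hs (Suc s) c b)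
     = (\<Sum>c'<4^s. \<Sum>d<4. (h4 (a mod 4) d * c4 d * h4 d (b mod 4)) * (Hs s (a div 4) c' * Cs s c' * Hs s c' (b div 4)))"
    by (simp add: sum_split4 split_aux ac_simps)
  also have "\<dots> = (\<Sum>d<4. h4 (a mod 4) d * c4 d * h4 d (b mod 4)) * (\<Sum>c'<4^s. Hs s (a div 4) c' * Cs s c' * Hs s c' (b div 4))"
    by (simp add: sum_distrib_right sum_distrib_left)
  also have "\<dots> = 2^Suc s * Cs (Suc s) a * Cs (Suc s) b * Hs (Suc s) a b"
    using Suc.IH base1[of "a mod 4" "b mod 4"] by simp
  finally show ?case .
qed

lemma S2: "(\<Sum>c<4^s. Cs s c) = 2^s"
proof (induction s)
  case 0 then show ?case by simp
next
  case (Suc s)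
  have "(\<Sum>c<4^Suc s. Cs (Suc s) c) = (\<Sum>c'<4^s. \<Sum>d<4. c4 d * Cs s c')"
    by (simp add: sum_split4 split_aux ac_simps)
  also have "\<dots> = (\<Sum>d<4. c4 d) * (\<Sum>c'<4^s. Cs s c')"
    by (simp add: sum_distrib_right sum_distrib_left)
  finally show ?case using Suc base2 by simp
qed

lemma ip_comm: "ip n f g = ip n g f" unfolding ip_def by (simp add: mult.commute)

lemma ip_cong: "(\<And>a. a < n \<Longrightarrow> f a = f' a) \<Longrightarrow> ip n f g = ip n f' g"
  unfolding ip_def by (rule sum.cong) auto

lemma ip_lin_left:
  assumes "\<And>a. a < n \<Longrightarrow> f a = (\<Sum>i<(r::nat). c i * e i a)"
  shows "ip n f g = (\<Sum>i<r. c i * ip n (e i) g)"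
proof -
  have "ip n f g = (\<Sum>a<n. \<Sum>i<r. c i * e i a * g a)"
    unfolding ip_def using assms by (simp add: sum_distrib_right)
  also have "\<dots> = (\<Sum>i<r. \<Sum>a<n. c i * (e i a * g a))" by (subst sum.swap) (simp add: ac_simps)
  also have "\<dots> = (\<Sum>i<r. c i * ip n (e i) g)" unfolding ip_def by (simp add: sum_distrib_left)
  finally show ?thesis .
qed

lemma ip_self_zero: "ip n w w = 0 \<Longrightarrow> a < n \<Longrightarrow> w a = 0"
  unfolding ip_def
  using sum_nonneg_eq_0_iff[of "{..<n}" "\<lambda>t. w t * w t"] by auto

lemma ip_self_nonneg: "ip n w w \<ge> 0" unfolding ip_def by (simp add: sum_nonneg)

lemma orth_sum: "(\<And>i j. i < (r::nat) \<Longrightarrow> j < r \<Longrightarrow> ip n (e i) (e j) = (if i = j then 1 else 0)) \<Longrightarrow> j < r \<Longrightarrow>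
   (\<Sum>i<r. d i * ip n (e i) (e j)) = d j"
proof -
  assume o: "\<And>i j. i < r \<Longrightarrow> j < r \<Longrightarrow> ip n (e i) (e j) = (if i = j then 1 else 0)" and j: "j < r"
  have "(\<Sum>i<r. d i * ip n (e i) (e j)) = (\<Sum>i<r. if i = j then d i else 0)"
    by (rule sum.cong) (auto simp: o j)
  also have "\<dots> = d j" using j by (subst sum.delta) auto
  finally show ?thesis .
qed

lemma gram_schmidt:
  fixes n :: nat and p :: "nat \<Rightarrow> nat \<Rightarrow> real"
  assumes "finite S" "S \<subseteq> {..<n}"
  shows "\<exists>(r::nat) e C. (\<forall>i<r. \<forall>j<r. ip n (e i) (e j) = (if i = j then 1 else 0)) \<and>
     (\<forall>i<r. \<forall>a<n. e i a = (\<Sum>b<n. C i b * p b a)) \<and>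
     (\<forall>b\<in>S. \<forall>a<n. p b a = (\<Sum>i<r. ip n (p b) (e i) * e i a))"
  using assms
proof (induction S rule: finite_induct)
  case empty
  show ?case by (rule exI[of _ 0]) simp
next
  case (insert x S)
  then obtain r :: nat and e C where
    orth: "\<forall>i<r. \<forall>j<r. ip n (e i) (e j) = (if i = j then 1 else 0)" and
    spn: "\<forall>i<r. \<forall>a<n. e i a = (\<Sum>b<n. C i b * p b a)" and
    rep: "\<forall>b\<in>S. \<forall>a<n. p b a = (\<Sum>i<r. ip n (p b) (e i) * e i a)" by blast
  have xn: "x < n" using insert by auto
  define d where "d i = ip n (p x) (e i)" for i
  define w where "w a = p x a - (\<Sum>i<r. d i * e i a)" for a
  have wperp: "ip n (e j) w = 0" if j: "j < r" for j
  proof -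
    have "ip n w (e j) = ip n (p x) (e j) - (\<Sum>i<r. d i * ip n (e i) (e j))"
    proof -
      have "ip n w (e j) = (\<Sum>a<n. p x a * e j a - (\<Sum>i<r. d i * e i a * e j a))"
        unfolding ip_def w_def by (rule sum.cong) (simp_all add: left_diff_distrib right_diff_distrib sum_distrib_right sum_distrib_left ac_simps)
      also have "\<dots> = ip n (p x) (e j) - (\<Sum>i<r. \<Sum>a<n. d i * (e i a * e j a))"
        unfolding ip_def by (simp add: sum_subtractf sum.swap[of _ "{..<r}"] ac_simps)
      also have "\<dots> = ip n (p x) (e j) - (\<Sum>i<r. d i * ip n (e i) (e j))"
        unfolding ip_def by (simp add: sum_distrib_left)
      finally show ?thesis .
    qed
    also have "\<dots> = 0" using orth_sum[of r n e j d] orth j by (simp add: d_def)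
    finally show ?thesis by (simp add: ip_comm)
  qed
  show ?case
  proof (cases "ip n w w = 0")
    case True
    have "p x a = (\<Sum>i<r. ip n (p x) (e i) * e i a)" if "a < n" for a
      using ip_self_zero[OF True that] by (simp add: w_def d_def)
    then show ?thesis using orth spn rep by blast
  next
    case False
    define nw where "nw = sqrt (ip n w w)"
    have nwpos: "nw > 0" using False ip_self_nonneg[of n w] by (simp add: nw_def)
    have nw2: "nw * nw = ip n w w" using ip_self_nonneg[of n w] by (simp add: nw_def)
    define e' where "e' = e(r := (\<lambda>a. w a / nw))"
    define C' where "C' = C(r := (\<lambda>b. ((if b = x then 1 else 0) - (\<Sum>i<r. d i * C i b)) / nw))"
    have e'r: "ip n (e' r) (e' r) = 1"
    proof -
      have "ip n (e' r) (e' r) = ip n w w / (nw * nw)"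
        unfolding ip_def e'_def by (simp add: sum_divide_distrib)
      then show ?thesis using nw2 nwpos False by simp
    qed
    have e'perp: "ip n (e i) (e' r) = 0" if "i < r" for i
    proof -
      have "ip n (e i) (e' r) = ip n (e i) w / nw"
        unfolding ip_def e'_def by (simp add: sum_divide_distrib)
      then show ?thesis using wperp[OF that] by simp
    qed
    have orth': "\<forall>i<Suc r. \<forall>j<Suc r. ip n (e' i) (e' j) = (if i = j then 1 else 0)"
    proof (intro allI impI)
      fix i j assume i: "i < Suc r" and j: "j < Suc r"
      show "ip n (e' i) (e' j) = (if i = j then 1 else 0)"
      proof (cases "i = r"; cases "j = r")
        assume "i = r" "j = r" then show ?thesis using e'r by simp
      next
        assume "i = r" "j \<noteq> r" then show ?thesis
          using e'perp[of j] j by (simp add: ip_comm e'_def)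
      next
        assume "i \<noteq> r" "j = r" then show ?thesis
          using e'perp[of i] i by (simp add: e'_def)
      next
        assume "i \<noteq> r" "j \<noteq> r" then show ?thesis
          using orth i j by (simp add: e'_def)
      qed
    qed
    have spn': "\<forall>i<Suc r. \<forall>a<n. e' i a = (\<Sum>b<n. C' i b * p b a)"
    proof (intro allI impI)
      fix i a assume i: "i < Suc r" and a: "a < n"
      show "e' i a = (\<Sum>b<n. C' i b * p b a)"
      proof (cases "i = r")
        case False then show ?thesis using spn i a by (simp add: e'_def C'_def)
      next
        case True
        have s1: "(\<Sum>b<n. (if b = x then 1 else 0) * p b a) = p x a"
          proof -
          have "(\<Sum>b<n. (if b = x then 1 else 0) * p b a) = (\<Sum>b<n. if b = x then p b a else 0)"
            by (rule sum.cong) auto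
          then show ?thesis using xn by simp
        qed
        have s2: "(\<Sum>b<n. (\<Sum>i<r. d i * C i b) * p b a) = (\<Sum>i<r. d i * e i a)"
        proof -
          have "(\<Sum>b<n. (\<Sum>i<r. d i * C i b) * p b a) = (\<Sum>i<r. d i * (\<Sum>b<n. C i b * p b a))"
            by (simp add: sum_distrib_right sum_distrib_left sum.swap[of _ "{..<n}"] ac_simps)
          also have "\<dots> = (\<Sum>i<r. d i * e i a)"
            using spn a by (intro sum.cong) auto
          finally show ?thesis .
        qed
        have "(\<Sum>b<n. C' i b * p b a) = ((\<Sum>b<n. (if b = x then 1 else 0) * p b a) - (\<Sum>b<n. (\<Sum>i<r. d i * C i b) * p b a)) / nw"
          using True by (simp add: C'_def sum_divide_distrib[symmetric] left_diff_distrib sum_subtractf del: sum.delta)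
        also have "\<dots> = w a / nw" by (simp add: s1 s2 w_def)
        finally show ?thesis using True by (simp add: e'_def)
      qed
    qed
    have rep': "\<forall>b\<in>insert x S. \<forall>a<n. p b a = (\<Sum>i<Suc r. ip n (p b) (e' i) * e' i a)"
    proof (intro ballI allI impI)
      fix b a assume b: "b \<in> insert x S" and a: "a < n"
      have old: "(\<Sum>i<r. ip n (p b) (e' i) * e' i a) = (\<Sum>i<r. ip n (p b) (e i) * e i a)"
        by (rule sum.cong) (auto simp: e'_def)
      show "p b a = (\<Sum>i<Suc r. ip n (p b) (e' i) * e' i a)"
      proof (cases "b = x")
        case True
        have "ip n (p x) w = (\<Sum>t<n. w t * w t + (\<Sum>i<r. d i * e i t) * w t)"
          unfolding ip_def by (rule sum.cong) (simp, simp add: w_def algebra_simps)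
        also have "\<dots> = ip n w w + ip n (\<lambda>a. \<Sum>i<r. d i * e i a) w"
          unfolding ip_def by (simp add: sum.distrib)
        also have "ip n (\<lambda>a. \<Sum>i<r. d i * e i a) w = (\<Sum>i<r. d i * ip n (e i) w)"
          by (rule ip_lin_left) simp
        also have "\<dots> = 0" using wperp by simp
        finally have "ip n (p x) w = nw * nw" using nw2 by simp
        then have "ip n (p x) (e' r) = nw"
          unfolding e'_def using nwpos by (simp add: ip_def sum_divide_distrib[symmetric])
        then have "(\<Sum>i<Suc r. ip n (p b) (e' i) * e' i a) = (\<Sum>i<r. d i * e i a) + w a"
          using True old nwpos by (simp add: e'_def d_def)
        then show ?thesis using True by (simp add: w_def)
      next
        case False
        then have bS: "b \<in> S" using b by auto
        have "ip n (p b) (e' r) = (\<Sum>i<r. ip n (p b) (e i) * ip n (e i) (e' r))"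
          by (rule ip_lin_left) (use rep bS in auto)
        also have "\<dots> = 0" using e'perp by simp
        finally show ?thesis using old rep bS a by simp
      qed
    qed
    show ?thesis using orth' spn' rep' by blast
  qed
qed


lemma proj_frame:
  fixes n m :: nat and P :: "nat \<Rightarrow> nat \<Rightarrow> real"
  assumes sym: "\<And>a b. a < n \<Longrightarrow> b < n \<Longrightarrow> P a b = P b a"
  and idem: "\<And>a b. a < n \<Longrightarrow> b < n \<Longrightarrow> (\<Sum>c<n. P a c * P c b) = P a b"
  and tr: "(\<Sum>a<n. P a a) = real m"
  shows "\<exists>e. (\<forall>i<m. \<forall>j<m. ip n (e i) (e j) = (if i = j then 1 else 0)) \<and>
    (\<forall>i<m. \<forall>a<n. (\<Sum>c<n. P a c * e i c) = e i a) \<and>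
    (\<forall>a<n. \<forall>b<n. P a b = (\<Sum>i<m. e i a * e i b))"
proof -
  obtain r :: nat and e C where
    orth: "\<forall>i<r. \<forall>j<r. ip n (e i) (e j) = (if i = j then 1 else 0)" and
    spn: "\<forall>i<r. \<forall>a<n. e i a = (\<Sum>b<n. C i b * (\<lambda>b a. P a b) b a)" and
    rep: "\<forall>b\<in>{..<n}. \<forall>a<n. (\<lambda>b a. P a b) b a = (\<Sum>i<r. ip n ((\<lambda>b a. P a b) b) (e i) * e i a)"
    using gram_schmidt[of "{..<n}" n "\<lambda>b a. P a b"] by blast
  have fix_e: "(\<Sum>c<n. P a c * e i c) = e i a" if i: "i < r" and a: "a < n" for i a
  proof -
    have "(\<Sum>c<n. P a c * e i c) = (\<Sum>c<n. P a c * (\<Sum>b<n. C i b * P c b))"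
      using spn i by (intro sum.cong) auto
    also have "\<dots> = (\<Sum>c<n. \<Sum>b<n. P a c * (C i b * P c b))" by (simp add: sum_distrib_left)
    also have "\<dots> = (\<Sum>b<n. \<Sum>c<n. P a c * (C i b * P c b))" by (rule sum.swap)
    also have "\<dots> = (\<Sum>b<n. C i b * (\<Sum>c<n. P a c * P c b))"
      by (simp add: sum_distrib_left ac_simps)
    also have "\<dots> = (\<Sum>b<n. C i b * P a b)"
      using idem a by (intro sum.cong) auto
    also have "\<dots> = e i a" using spn i a by simp
    finally show ?thesis .
  qed
  have rep2: "P a b = (\<Sum>i<r. e i a * e i b)" if a: "a < n" and b: "b < n" for a b
  proof -
    have "P a b = (\<Sum>i<r. ip n (\<lambda>c. P c b) (e i) * e i a)" using rep a b by auto
    also have "\<dots> = (\<Sum>i<r. e i b * e i a)"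
    proof (rule sum.cong)
      fix i assume "i \<in> {..<r}"
      have "ip n (\<lambda>c. P c b) (e i) = (\<Sum>c<n. P b c * e i c)"
        unfolding ip_def by (rule sum.cong) (auto intro: arg_cong2[where f=times] sym[OF _ b])
      then have "ip n (\<lambda>c. P c b) (e i) = e i b"
        using fix_e[of i b] b \<open>i \<in> {..<r}\<close> by simp
      then show "ip n (\<lambda>c. P c b) (e i) * e i a = e i b * e i a" by simp
    qed simp
    finally show ?thesis by (simp add: mult.commute)
  qed
  have "real m = (\<Sum>a<n. \<Sum>i<r. e i a * e i a)" using tr rep2 by simp
  also have "\<dots> = (\<Sum>i<r. ip n (e i) (e i))" unfolding ip_def by (rule sum.swap)
  also have "\<dots> = real r" using orth by simp
  finally have "m = r" by simp
  then show ?thesis using orth fix_e rep2 by blast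
qed

lemma weight_lemma:
  fixes n m :: nat and P :: "nat \<Rightarrow> nat \<Rightarrow> real"
  assumes sym: "\<And>a b. a < n \<Longrightarrow> b < n \<Longrightarrow> P a b = P b a"
  and orth: "\<forall>i<m. \<forall>j<m. ip n (e i) (e j) = (if i = j then 1 else 0)"
  and fix_e: "\<forall>i<m. \<forall>a<n. (\<Sum>c<n. P a c * e i c) = e i a"
  and wt: "\<And>a b. a < n \<Longrightarrow> b < n \<Longrightarrow> (\<Sum>c<n. P a c * w c * P c b) = lam * P a b"
  and i: "i < m" and j: "j < m"
  shows "(\<Sum>a<n. w a * e i a * e j a) = lam * (if i = j then 1 else 0)"
proof -
  have fe: "(\<Sum>c<n. P c a * e k c) = e k a" if "k < m" "a < n" for k a
  proof -
    have "(\<Sum>c<n. P c a * e k c) = (\<Sum>c<n. P a c * e k c)"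
      by (rule sum.cong) (auto intro: arg_cong2[where f=times] sym[OF _ that(2)])
    then show ?thesis using fix_e that by simp
  qed
  have "(\<Sum>a<n. w a * e i a * e j a) = (\<Sum>a<n. w a * (\<Sum>c<n. P c a * e i c) * (\<Sum>d<n. P a d * e j d))"
    using fix_e fe i j by (intro sum.cong) auto
  also have "\<dots> = (\<Sum>a<n. \<Sum>c<n. \<Sum>d<n. e i c * e j d * (P c a * w a * P a d))"
    by (intro sum.cong refl)
       (simp add: sum_distrib_left sum_distrib_right ac_simps)
  also have "\<dots> = (\<Sum>c<n. \<Sum>a<n. \<Sum>d<n. e i c * e j d * (P c a * w a * P a d))"
    by (rule sum.swap)
  also have "\<dots> = (\<Sum>c<n. \<Sum>d<n. \<Sum>a<n. e i c * e j d * (P c a * w a * P a d))"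
    by (rule sum.cong, simp, rule sum.swap)
  also have "\<dots> = (\<Sum>c<n. \<Sum>d<n. e i c * e j d * (\<Sum>a<n. P c a * w a * P a d))"
    by (simp add: sum_distrib_left)
  also have "\<dots> = (\<Sum>c<n. \<Sum>d<n. e i c * e j d * (lam * P c d))"
    using wt by (intro sum.cong refl) simp
  also have "\<dots> = lam * (\<Sum>c<n. e i c * (\<Sum>d<n. P c d * e j d))"
    by (simp add: sum_distrib_left ac_simps)
  also have "\<dots> = lam * (\<Sum>c<n. e i c * e j c)"
    using fix_e j by simp
  also have "\<dots> = lam * (if i = j then 1 else 0)"
    using orth i j unfolding ip_def by simp
  finally show ?thesis .
qed

definition ccf :: "real \<Rightarrow> real \<Rightarrow> real \<Rightarrow> real \<Rightarrow> real" where
  "ccf t q x y = (if x = -1 \<and> y = -1 then 1/(t+1) else if x = 1 \<and> y = 1 then -1/(t-1) else 1/q)"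

definition lamf :: "real \<Rightarrow> real \<Rightarrow> real" where
  "lamf t sg = (if sg = -1 then 3*t/(2*(t+1)) else 3*t/(2*(t-1)))"

lemma alg:
  fixes t q x y h sg e :: real
  assumes t: "t \<ge> 2" and q: "q > 0" "q*q = (t*t-1)/3"
  and x: "x = 1 \<or> x = -1" and y: "y = 1 \<or> y = -1" and h: "h = 1 \<or> h = -1"
  and sg: "sg = 1 \<or> sg = -1"
  and e: "(e = 1 \<and> x = y \<and> h = 1) \<or> e = 0"
  shows "e * (1 - ccf t q x x)^2 * ((1 + sg*x)/2) + (1 - ccf t q x x) * ((1 + sg*x)/2) * h * ccf t q x y
     + h * ccf t q x y * ((1 + sg*y)/2) * (1 - ccf t q y y)
     + ccf t q x sg * ccf t q sg y / 2 * (t*t*e + sg * t * x * y * h)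
     = lamf t sg * (e * (1 - ccf t q x x) + h * ccf t q x y)"
proof -
  define a where "a = 1/(t+1)"
  define b where "b = 1/(t-1)"
  define u where "u = 1/q"
  have ha: "a*(t+1) = 1" using t by (simp add: a_def)
  have hb: "b*(t-1) = 1" using t by (simp add: b_def)
  have hu: "u*u*(t*t-1) = 3" using q by (simp add: u_def) (simp add: field_simps)
  have lam: "lamf t z = (if z = -1 then 3*t*a/2 else 3*t*b/2)" for z by (simp add: lamf_def a_def b_def)
  have c1: "ccf t q x y = (if x = -1 \<and> y = -1 then a else if x = 1 \<and> y = 1 then -b else u)" for x y
    by (simp add: ccf_def a_def b_def u_def)
  show ?thesis
  using sg x y h e
  apply (elim disjE conjE)
  apply (simp_all add: c1 lam field_simps)
  apply (insert ha hb hu)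
  apply ((rule disjI2)?, algebra)+
  done
qed

definition tq :: "nat \<Rightarrow> real" where "tq s = sqrt ((2^s * 2^s - 1) / 3)"

definition Gm :: "nat \<Rightarrow> nat \<Rightarrow> nat \<Rightarrow> real" where
  "Gm s a b = (if a = b then 1 else Hs s a b * ccf (2^s) (tq s) (Cs s a) (Cs s b))"

lemma G_alt: "Gm s a b = (if a = b then 1 - ccf (2^s) (tq s) (Cs s a) (Cs s a) else 0)
   + Hs s a b * ccf (2^s) (tq s) (Cs s a) (Cs s b)"
  unfolding Gm_def by (simp add: Hs_diag)

lemma G_sym: "Gm s a b = Gm s b a"
  unfolding Gm_def ccf_def by (auto simp: Hs_sym)

lemma ccf_w: "(x = 1 \<or> x = -1) \<Longrightarrow> (sg = 1 \<or> sg = -1) \<Longrightarrow>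
  ccf t q a x * ((1 + sg * x)/2) * ccf t q x b = ccf t q a sg * ccf t q sg b * ((1 + sg * x)/2)"
  by auto

lemma tq_props: "s \<ge> 1 \<Longrightarrow> tq s > 0 \<and> tq s * tq s = ((2::real)^s * 2^s - 1) / 3"
proof -
  assume s: "s \<ge> 1"
  have "(2::real)^s \<ge> 2^1" using s by (intro power_increasing) auto
  then have "(2::real)^s * 2^s \<ge> 2 * 2" by (intro mult_mono) auto
  then have p: "((2::real)^s * 2^s - 1) / 3 > 0" by simp
  then show ?thesis unfolding tq_def
    by (simp add: real_sqrt_mult[symmetric])
qed

lemma main_identity:
  assumes s: "s \<ge> 1" and sg: "sg = 1 \<or> sg = -1" and a: "a < 4^s" and b: "b < 4^s"
  shows "(\<Sum>c<4^s. Gm s a c * ((1 + sg * Cs s c)/2) * Gm s c b) = lamf (2^s) sg * Gm s a b"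
proof -
  define t :: real where "t = 2^s"
  define q where "q = tq s"
  define D where "D c = 1 - ccf t q (Cs s c) (Cs s c)" for c
  define w where "w c = (1 + sg * Cs s c)/2" for c
  define K where "K c d = Hs s c d * ccf t q (Cs s c) (Cs s d)" for c d
  have G: "Gm s c d = (if c = d then D c else 0) + K c d" for c d
    unfolding G_alt D_def K_def t_def q_def by simp
  have "(\<Sum>c<4^s. Gm s a c * w c * Gm s c b) =
     (\<Sum>c<4^s. (if a = c then D a * w a * (if a = b then D b else 0) else 0))
   + (\<Sum>c<4^s. (if a = c then D a * w a * K a b else 0))
   + (\<Sum>c<4^s. (if c = b then K a b * w b * D b else 0))
   + (\<Sum>c<4^s. K a c * w c * K c b)"
  proof -
    have pw: "Gm s a c * w c * Gm s c b = (if a = c then D a * w a * (if a = b then D b else 0) else 0)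
      + (if a = c then D a * w a * K a b else 0) + (if c = b then K a b * w b * D b else 0)
      + K a c * w c * K c b" for c
      unfolding G by (cases "a = c"; cases "c = b") (simp_all add: algebra_simps)
    show ?thesis by (simp only: pw sum.distrib)
  qed
  also have "\<dots> = (if a = b then D a * D a * w a else 0) + D a * w a * K a b + K a b * w b * D b
       + (\<Sum>c<4^s. K a c * w c * K c b)"
    using a b by simp
  also have "(\<Sum>c<4^s. K a c * w c * K c b) = ccf t q (Cs s a) sg * ccf t q sg (Cs s b) / 2 *
      ((\<Sum>c<4^s. Hs s a c * Hs s c b) + sg * (\<Sum>c<4^s. Hs s a c * Cs s c * Hs s c b))"
  proof -
    have "(\<Sum>c<4^s. K a c * w c * K c b) = (\<Sum>c<4^s. ccf t q (Cs s a) sg * ccf t q sg (Cs s b) / 2 *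
      (Hs s a c * Hs s c b + sg * (Hs s a c * Cs s c * Hs s c b)))"
    proof (rule sum.cong)
      fix c
      have "K a c * w c * K c b = Hs s a c * Hs s c b * (ccf t q (Cs s a) (Cs s c) * ((1 + sg * Cs s c)/2) * ccf t q (Cs s c) (Cs s b))"
        unfolding K_def w_def by simp
      also have "\<dots> = Hs s a c * Hs s c b * (ccf t q (Cs s a) sg * ccf t q sg (Cs s b) * ((1 + sg * Cs s c)/2))"
        using ccf_w[OF Cs_pm sg] by simp
      finally show "K a c * w c * K c b = ccf t q (Cs s a) sg * ccf t q sg (Cs s b) / 2 *
        (Hs s a c * Hs s c b + sg * (Hs s a c * Cs s c * Hs s c b))"
        by (simp add: algebra_simps)
    qed simp
    then show ?thesis by (simp only: sum_distrib_left sum.distrib[symmetric])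
  qed
  also have "(\<Sum>c<4^s. Hs s a c * Hs s c b) = t * t * (if a = b then 1 else 0)"
    using S0[OF a b] by (simp add: t_def power_mult_distrib[symmetric])
  also have "(\<Sum>c<4^s. Hs s a c * Cs s c * Hs s c b) = t * Cs s a * Cs s b * Hs s a b"
    using S1 by (simp add: t_def)
  finally have L: "(\<Sum>c<4^s. Gm s a c * w c * Gm s c b) =
    (if a = b then D a * D a * w a else 0) + D a * w a * K a b + K a b * w b * D b +
    ccf t q (Cs s a) sg * ccf t q sg (Cs s b) / 2 * (t * t * (if a = b then 1 else 0) + sg * (t * Cs s a * Cs s b * Hs s a b))" .
  have t2: "t \<ge> 2" unfolding t_def using s
    by (metis power_increasing power_one_right one_le_numeral)
  have e: "((if a = b then 1 else 0) = (1::real) \<and> Cs s a = Cs s b \<and> Hs s a b = 1) \<or> (if a = b then 1 else 0) = (0::real)"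
    by (auto simp: Hs_diag)
  have A: "(if a = b then 1 else 0) * (1 - ccf t q (Cs s a) (Cs s a))^2 * ((1 + sg*Cs s a)/2)
     + (1 - ccf t q (Cs s a) (Cs s a)) * ((1 + sg*Cs s a)/2) * Hs s a b * ccf t q (Cs s a) (Cs s b)
     + Hs s a b * ccf t q (Cs s a) (Cs s b) * ((1 + sg*Cs s b)/2) * (1 - ccf t q (Cs s b) (Cs s b))
     + ccf t q (Cs s a) sg * ccf t q sg (Cs s b) / 2 * (t*t*(if a = b then 1 else 0) + sg * t * Cs s a * Cs s b * Hs s a b)
     = lamf t sg * ((if a = b then 1 else 0) * (1 - ccf t q (Cs s a) (Cs s a)) + Hs s a b * ccf t q (Cs s a) (Cs s b))"
    by (rule alg[OF t2 _ _ Cs_pm Cs_pm Hs_pm sg e]) (use tq_props[OF s] in \<open>auto simp: q_def t_def\<close>)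
  have Gab: "Gm s a b = (if a = b then 1 else 0) * (1 - ccf t q (Cs s a) (Cs s a)) + Hs s a b * ccf t q (Cs s a) (Cs s b)"
    by (simp add: G_alt t_def q_def)
  have R: "(if a = b then D a * D a * w a else 0) + D a * w a * K a b + K a b * w b * D b +
    ccf t q (Cs s a) sg * ccf t q sg (Cs s b) / 2 * (t * t * (if a = b then 1 else 0) + sg * (t * Cs s a * Cs s b * Hs s a b))
    = (if a = b then 1 else 0) * (1 - ccf t q (Cs s a) (Cs s a))^2 * ((1 + sg*Cs s a)/2)
     + (1 - ccf t q (Cs s a) (Cs s a)) * ((1 + sg*Cs s a)/2) * Hs s a b * ccf t q (Cs s a) (Cs s b)
     + Hs s a b * ccf t q (Cs s a) (Cs s b) * ((1 + sg*Cs s b)/2) * (1 - ccf t q (Cs s b) (Cs s b))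
     + ccf t q (Cs s a) sg * ccf t q sg (Cs s b) / 2 * (t*t*(if a = b then 1 else 0) + sg * t * Cs s a * Cs s b * Hs s a b)"
    by (cases "a = b") (simp_all add: D_def K_def w_def power2_eq_square algebra_simps)
  have "(\<Sum>c<4^s. Gm s a c * w c * Gm s c b) = lamf t sg * Gm s a b"
    unfolding L R A Gab ..
  then show ?thesis by (simp add: w_def t_def)
qed

lemma wt_ind: "(sg = 1 \<or> sg = -1) \<Longrightarrow> (1 + sg * Cs s a)/2 = (if Cs s a = sg then 1 else 0)"
  using Cs_pm[of s a] by auto

lemma sum_ind:
  fixes f :: "nat \<Rightarrow> real"
  assumes sg: "sg = 1 \<or> sg = -1"
  shows "(\<Sum>a<N. (1 + sg * Cs s a)/2 * f a) = (\<Sum>a\<in>{a. a < N \<and> Cs s a = sg}. f a)"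
proof -
  have "(\<Sum>a<N. (1 + sg * Cs s a)/2 * f a) = (\<Sum>a<N. if a \<in> {a. Cs s a = sg} then f a else 0)"
    by (rule sum.cong) (auto simp: wt_ind[OF sg])
  also have "\<dots> = (\<Sum>a\<in>{..<N} \<inter> {a. Cs s a = sg}. f a)"
    by (simp add: sum.inter_restrict)
  also have "{..<N} \<inter> {a. Cs s a = sg} = {a. a < N \<and> Cs s a = sg}" by auto
  finally show ?thesis .
qed

lemma card_part:
  assumes sg: "sg = 1 \<or> sg = -1"
  shows "real (card {a. a < 4^s \<and> Cs s a = sg}) = (2^s * 2^s + sg * 2^s) / 2"
proof -
  have "real (card {a. a < 4^s \<and> Cs s a = sg}) = (\<Sum>a\<in>{a. a < 4^s \<and> Cs s a = sg}. 1)" by simp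
  also have "\<dots> = (\<Sum>a<4^s. (1 + sg * Cs s a)/2 * 1)" by (rule sum_ind[OF sg, symmetric])
  also have "\<dots> = (real (4^s) + sg * (\<Sum>a<4^s. Cs s a)) / 2"
    by (simp add: sum_divide_distrib[symmetric] sum.distrib sum_distrib_left)
  also have "\<dots> = (2^s * 2^s + sg * 2^s) / 2"
    by (simp add: S2 power_mult_distrib[symmetric])
  finally show ?thesis .
qed

lemma frame_part:
  fixes u :: "nat \<Rightarrow> nat \<Rightarrow> real"
  assumes bij: "bij_betw f {..<n} S"
  and gram: "\<And>a b. a \<in> S \<Longrightarrow> b \<in> S \<Longrightarrow> ip mm (u a) (u b) = Gm s a b"
  and tight: "\<And>p q. p < mm \<Longrightarrow> q < mm \<Longrightarrow> (\<Sum>a\<in>S. u a p * u a q) = (real n / real mm) * (if p = q then 1 else 0)"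
  and ang: "\<And>a b. a \<in> S \<Longrightarrow> b \<in> S \<Longrightarrow> a \<noteq> b \<Longrightarrow> \<bar>Gm s a b\<bar> = c"
  shows "is_ETF mm n (\<lambda>j. u (f j))"
proof -
  have fS: "j < n \<Longrightarrow> f j \<in> S" for j using bij by (auto simp: bij_betw_def)
  have inj: "j < n \<Longrightarrow> i < n \<Longrightarrow> f i = f j \<Longrightarrow> i = j" for i j
    using bij by (auto simp: bij_betw_def inj_on_def)
  have t: "(\<Sum>i<n. u (f i) p * u (f i) q) = (\<Sum>a\<in>S. u a p * u a q)" for p q
    using sum.reindex_bij_betw[OF bij, of "\<lambda>a. u a p * u a q"] by simp
  show ?thesis unfolding is_ETF_def
  proof (intro conjI allI impI)
    fix i assume "i < n" then show "ip mm (u (f i)) (u (f i)) = 1"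
      using gram fS by (simp add: Gm_def)
  next
    show "\<exists>c. \<forall>i<n. \<forall>j<n. i \<noteq> j \<longrightarrow> \<bar>ip mm (u (f i)) (u (f j))\<bar> = c"
      using gram fS ang inj by metis
  next
    fix p q assume "p < mm" "q < mm"
    then show "(\<Sum>i<n. u (f i) p * u (f i) q) = real n / real mm * (if p = q then 1 else 0)"
      using t tight by simp
  qed
qed

theorem theorem4:
  fixes s :: nat
  assumes "s \<ge> 2"
  shows "\<exists>v w. mutually_unbiased ((2^(2*s) - 1) div 3)
                  (2^(s-1) * (2^s - 1)) v (2^(s-1) * (2^s + 1)) w"
proof -
  have s1: "s \<ge> 1" using assms by simp
  define mm :: nat where "mm = (2^(2*s) - 1) div 3"
  define kk :: nat where "kk = 2^(s-1) * (2^s - 1)"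
  define ll :: nat where "ll = 2^(s-1) * (2^s + 1)"
  define t :: real where "t = 2^s"
  have t2: "t \<ge> 2" unfolding t_def using s1
    by (metis power_increasing power_one_right one_le_numeral)
  have N_real: "real (4^s) = t * t" by (simp add: t_def power_mult_distrib[symmetric])
  have p4: "(2::nat)^(2*s) = 4^s" by (simp add: power_mult)
  have mod3: "(4::nat)^s mod 3 = 1"
  proof -
    have "(4::nat)^s mod 3 = (4 mod 3)^s mod 3" by (rule power_mod[symmetric])
    then show ?thesis by simp
  qed
  have ge1: "(4::nat)^s \<ge> 1" by simp
  obtain k :: nat where k: "4^s = 3 * k + 1"
    using mod3 div_mult_mod_eq[of "(4::nat)^s" 3] by (metis mult.commute)
  have mmk: "mm = k" unfolding mm_def p4 k by simp
  have "real (4^s) = 3 * real mm + 1" unfolding mmk k by simp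
  then have mm_real: "real mm = (t*t - 1)/3" using N_real by simp
  have tt: "t * t \<ge> 2 * 2" using mult_mono[OF t2 t2] t2 by simp
  have mpos: "real mm > 0" unfolding mm_real using tt by simp
  have sS: "s = Suc (s - 1)" using s1 by simp
  have h2: "(2::real)^(s-1) = t/2" unfolding t_def by (subst (2) sS) simp
  have kk_real: "real kk = t * (t - 1) / 2"
  proof -
    have "real kk = (2::real)^(s-1) * (t - 1)" unfolding kk_def t_def by (simp add: of_nat_diff)
    then show ?thesis using h2 by simp
  qed
  have ll_real: "real ll = t * (t + 1) / 2"
  proof -
    have "real ll = (2::real)^(s-1) * (t + 1)" unfolding ll_def t_def by (simp add: algebra_simps)
    then show ?thesis using h2 by simp
  qed
  have tm: "t - 1 > 0" "t + 1 > 0" using t2 by auto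
  have mm2: "real mm = (t - 1) * (t + 1) / 3" unfolding mm_real by (simp add: algebra_simps)
  have e1: "3*t * real mm = real kk * (2*(t+1))" unfolding kk_real mm2 by (simp add: field_simps)
  have e2: "3*t * real mm = real ll * (2*(t-1))" unfolding ll_real mm2 by (simp add: field_simps)
  have lamV: "lamf t (-1) = real kk / real mm"
    unfolding lamf_def using frac_eq_eq[of "2*(t+1)" "real mm" "3*t" "real kk"] e1 tm mpos by simp
  have lamW: "lamf t 1 = real ll / real mm"
    unfolding lamf_def using frac_eq_eq[of "2*(t-1)" "real mm" "3*t" "real ll"] e2 tm mpos by simp
  have e3: "real kk + real ll = real (4^s)" unfolding kk_real ll_real N_real by (simp add: field_simps)
  have lsum: "lamf t (-1) + lamf t 1 = real (4^s) / real mm"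
    unfolding lamV lamW e3[symmetric] by (simp add: add_divide_distrib)
  define P where "P a b = real mm / real (4^s) * Gm s a b" for a b
  have Psym: "P a b = P b a" for a b unfolding P_def using G_sym by simp
  have Gsq: "(\<Sum>c<4^s. Gm s a c * Gm s c b) = real (4^s) / real mm * Gm s a b"
    if a: "a < 4^s" and b: "b < 4^s" for a b
  proof -
    have "(\<Sum>c<4^s. Gm s a c * Gm s c b) = (\<Sum>c<4^s. Gm s a c * ((1 + (-1) * Cs s c)/2) * Gm s c b)
       + (\<Sum>c<4^s. Gm s a c * ((1 + 1 * Cs s c)/2) * Gm s c b)"
      by (simp add: sum.distrib[symmetric] algebra_simps add_divide_distrib[symmetric])
    also have "\<dots> = (lamf t (-1) + lamf t 1) * Gm s a b"
      using main_identity[OF s1 _ a b, of "-1"] main_identity[OF s1 _ a b, of 1]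
      by (simp add: t_def algebra_simps)
    finally show ?thesis using lsum by simp
  qed
  have idem: "(\<Sum>c<4^s. P a c * P c b) = P a b" if "a < 4^s" "b < 4^s" for a b
  proof -
    have "(\<Sum>c<4^s. P a c * P c b) = (real mm / real (4^s))^2 * (\<Sum>c<4^s. Gm s a c * Gm s c b)"
      unfolding P_def by (simp add: sum_distrib_left sum_divide_distrib power2_eq_square ac_simps)
    also have "\<dots> = P a b" using Gsq[OF that] mpos unfolding P_def
      by (simp add: power2_eq_square)
    finally show ?thesis .
  qed
  have tr: "(\<Sum>a<4^s. P a a) = real mm"
    unfolding P_def Gm_def by simp
  obtain e where
    orth: "\<forall>i<mm. \<forall>j<mm. ip (4^s) (e i) (e j) = (if i = j then 1 else 0)" and
    fix_e: "\<forall>i<mm. \<forall>a<4^s. (\<Sum>c<4^s. P a c * e i c) = e i a" and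
    rep: "\<forall>a<4^s. \<forall>b<4^s. P a b = (\<Sum>i<mm. e i a * e i b)"
    using proj_frame[of "4^s" P mm] Psym idem tr by blast
  define u where "u a i = sqrt (real (4^s) / real mm) * e i a" for a i
  have gram: "ip mm (u a) (u b) = Gm s a b" if "a < 4^s" "b < 4^s" for a b
  proof -
    have sq: "sqrt (real (4^s) / real mm) * sqrt (real (4^s) / real mm) = real (4^s) / real mm"
      using mpos by simp
    have "ip mm (u a) (u b) = real (4^s) / real mm * (\<Sum>i<mm. e i a * e i b)"
      unfolding ip_def u_def by (simp add: sum_distrib_left sq[symmetric] ac_simps)
    also have "\<dots> = Gm s a b"
    proof -
      have r: "(\<Sum>i<mm. e i a * e i b) = real mm / real (4^s) * Gm s a b" using rep that unfolding P_def by simp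
      show ?thesis unfolding r using mpos by simp
    qed
    finally show ?thesis .
  qed
  have tightS: "(\<Sum>a\<in>{a. a < 4^s \<and> Cs s a = sg}. u a p * u a q) = lamf t sg * (if p = q then 1 else 0)"
    if sg: "sg = 1 \<or> sg = -1" and p: "p < mm" and q: "q < mm" for sg p q
  proof -
    have wt: "(\<Sum>c<4^s. P a c * ((1 + sg * Cs s c)/2) * P c b) = (real mm / real (4^s) * lamf t sg) * P a b"
      if "a < 4^s" "b < 4^s" for a b
    proof -
      have "(\<Sum>c<4^s. P a c * ((1 + sg * Cs s c)/2) * P c b) = (real mm / real (4^s))^2 *
         (\<Sum>c<4^s. Gm s a c * ((1 + sg * Cs s c)/2) * Gm s c b)"
        unfolding P_def by (simp add: sum_distrib_left sum_divide_distrib power2_eq_square ac_simps)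
      also have "\<dots> = (real mm / real (4^s))^2 * (lamf t sg * Gm s a b)"
        using main_identity[OF s1 sg that] by (simp add: t_def)
      finally show ?thesis unfolding P_def by (simp add: power2_eq_square)
    qed
    have W: "(\<Sum>a<4^s. (1 + sg * Cs s a)/2 * e p a * e q a) = (real mm / real (4^s) * lamf t sg) * (if p = q then 1 else 0)"
      by (rule weight_lemma[where P=P, OF _ orth fix_e wt p q]) (simp add: Psym)
    have "(\<Sum>a\<in>{a. a < 4^s \<and> Cs s a = sg}. u a p * u a q) = (\<Sum>a<4^s. (1 + sg * Cs s a)/2 * (u a p * u a q))"
      by (rule sum_ind[OF sg, symmetric])
    also have "\<dots> = real (4^s) / real mm * (\<Sum>a<4^s. (1 + sg * Cs s a)/2 * e p a * e q a)"
    proof -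
      have sq: "sqrt (real (4^s) / real mm) * sqrt (real (4^s) / real mm) = real (4^s) / real mm"
        using mpos by simp
      show ?thesis unfolding u_def by (simp add: sum_distrib_left sq[symmetric] ac_simps)
    qed
    also have "\<dots> = lamf t sg * (if p = q then 1 else 0)" unfolding W using mpos by simp
    finally show ?thesis .
  qed
  define SV where "SV = {a. a < 4^s \<and> Cs s a = -1}"
  define SW where "SW = {a. a < 4^s \<and> Cs s a = 1}"
  have cV: "card SV = kk"
  proof -
    have c: "real (card SV) = (2^s * 2^s + (-1) * 2^s) / 2" unfolding SV_def by (rule card_part) simp
    have "real (card SV) = real kk" unfolding c kk_real t_def
      by (simp add: algebra_simps)
    then show ?thesis by (simp only: of_nat_eq_iff)
  qed
  have cW: "card SW = ll"
  proof -
    have c: "real (card SW) = (2^s * 2^s + 1 * 2^s) / 2" unfolding SW_def by (rule card_part) simp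
    have "real (card SW) = real ll" unfolding c ll_real t_def
      by (simp add: algebra_simps)
    then show ?thesis by (simp only: of_nat_eq_iff)
  qed
  have finV: "finite SV" unfolding SV_def by simp
  have finW: "finite SW" unfolding SW_def by simp
  obtain fV where fV: "bij_betw fV {..<kk} SV"
    using ex_bij_betw_nat_finite[OF finV] cV by (auto simp: atLeast0LessThan)
  obtain fW where fW: "bij_betw fW {..<ll} SW"
    using ex_bij_betw_nat_finite[OF finW] cW by (auto simp: atLeast0LessThan)
  have qpos: "tq s > 0" using tq_props[OF s1] by simp
  have ETFV: "is_ETF mm kk (\<lambda>j. u (fV j))"
  proof (rule frame_part[OF fV, where s=s and c="1/(t+1)"])
    show "ip mm (u a) (u b) = Gm s a b" if "a \<in> SV" "b \<in> SV" for a b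
      using gram that unfolding SV_def by simp
    show "(\<Sum>a\<in>SV. u a p * u a q) = real kk / real mm * (if p = q then 1 else 0)"
      if "p < mm" "q < mm" for p q
      using tightS[of "-1" p q] that lamV unfolding SV_def by simp
    show "\<bar>Gm s a b\<bar> = 1 / (t + 1)" if "a \<in> SV" "b \<in> SV" "a \<noteq> b" for a b
      using that t2 unfolding SV_def Gm_def ccf_def t_def by (simp add: abs_mult abs_Hs)
  qed
  have ETFW: "is_ETF mm ll (\<lambda>j. u (fW j))"
  proof (rule frame_part[OF fW, where s=s and c="1/(t-1)"])
    show "ip mm (u a) (u b) = Gm s a b" if "a \<in> SW" "b \<in> SW" for a b
      using gram that unfolding SW_def by simp
    show "(\<Sum>a\<in>SW. u a p * u a q) = real ll / real mm * (if p = q then 1 else 0)"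
      if "p < mm" "q < mm" for p q
      using tightS[of 1 p q] that lamW unfolding SW_def by simp
    show "\<bar>Gm s a b\<bar> = 1 / (t - 1)" if "a \<in> SW" "b \<in> SW" "a \<noteq> b" for a b
      using that t2 unfolding SW_def Gm_def ccf_def t_def by (simp add: abs_mult abs_Hs)
  qed
  have MU: "\<forall>i<kk. \<forall>j<ll. \<bar>ip mm (u (fV i)) (u (fW j))\<bar> = 1 / tq s"
  proof (intro allI impI)
    fix i j assume i: "i < kk" and j: "j < ll"
    have a: "fV i \<in> SV" using fV i by (auto simp: bij_betw_def)
    have b: "fW j \<in> SW" using fW j by (auto simp: bij_betw_def)
    have ne: "fV i \<noteq> fW j" using a b unfolding SV_def SW_def by auto
    show "\<bar>ip mm (u (fV i)) (u (fW j))\<bar> = 1 / tq s"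
      using gram[of "fV i" "fW j"] a b ne qpos unfolding SV_def SW_def Gm_def ccf_def
      by (simp add: abs_mult abs_Hs)
  qed
  have "mutually_unbiased mm kk (\<lambda>j. u (fV j)) ll (\<lambda>j. u (fW j))"
    unfolding mutually_unbiased_def using ETFV ETFW MU by blast
  then show ?thesis unfolding mm_def kk_def ll_def by blast
qed

end
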